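(* Let $h:\mathbb{R}^n\to\mathbb{R}\cup\{+\infty\}$ be a proper closed convex function and $F:\mathbb{R}^n\to\mathbb{R}$ a convex function, $f:=F+h$, and suppose $f$ attains its minimum value $f^*$ at some $x^*$. Let $q\in[0,2)$, $L>0$, $\delta\ge0$, and suppose that for every $y\in\mathrm{dom}\, f$ one can compute $g(y)$ with $$0\le F(x)-\big(F(y)+\langle g(y),x-y\rangle\big)\le \frac{L}{2}\|x-y\|^2+\delta\|x-y\|^q\quad\text{for all }x\in\mathrm{dom}\, f.$$ Let $\rho>0$, $\alpha=\frac{1}{L+q\rho}$, $x_0\in\mathrm{dom}\, h$, and $x_{k+1}=\mathrm{prox}_{\alpha h}(x_k-\alpha g(x_k))$ for $k\ge0$, where $\mathrm{prox}_{\gamma h}(z):=\arg\min_{y\in\mathrm{dom}\, h}\{h(y)+\tfrac{1}{2\gamma}\|z-y\|^2\}$. Define $\hat x_k=\frac{1}{k+1}\sum_{i=0}^{k}x_{i+1}$ and $R=\|x_0-x^*\|$. Then for all $k\ge1$, $$f(\hat x_k)-f^*\le \frac{(L+q\rho)R^2}{2k}+\frac{(2-q)\,\delta^{\frac{2}{2-q}}}{2\rho^{\frac{q}{2-q}}}.$$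
   Context: $\|\cdot\|$ is the Euclidean norm. The two-sided inequality on $g(y)$ is the paper's "inexact first-order $(\delta,L)$-oracle of degree $q$" for convex $F$. *)

theory Defs
  imports "HOL-Analysis.Analysis"
begin

definition edom :: "('a \<Rightarrow> ereal) \<Rightarrow> 'a set" where
  "edom h = {x. h x < \<infinity>}"

definition epigraph :: "('a \<Rightarrow> ereal) \<Rightarrow> ('a \<times> real) set" where
  "epigraph h = {(x, t). h x \<le> ereal t}"

definition proper_fun :: "('a \<Rightarrow> ereal) \<Rightarrow> bool" where
  "proper_fun h \<longleftrightarrow> (\<forall>x. h x \<noteq> -\<infinity>) \<and> edom h \<noteq> {}"

definition closed_fun :: "('a::topological_space \<Rightarrow> ereal) \<Rightarrow> bool" where
  "closed_fun h \<longleftrightarrow> closed (epigraph h)"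

definition convex_fun :: "('a::real_vector \<Rightarrow> ereal) \<Rightarrow> bool" where
  "convex_fun h \<longleftrightarrow> convex (epigraph h)"

definition prox_set :: "real \<Rightarrow> ('a::real_normed_vector \<Rightarrow> ereal) \<Rightarrow> 'a \<Rightarrow> 'a set" where
  "prox_set \<gamma> h z = {p \<in> edom h. \<forall>y \<in> edom h.
      h p + ereal ((norm (z - p))\<^sup>2 / (2 * \<gamma>)) \<le> h y + ereal ((norm (z - y))\<^sup>2 / (2 * \<gamma>))}"

end

theory Submission
  imports Defs
begin


lemma young_aux:
  fixes q d \<delta> \<rho> :: real
  assumes "0 \<le> q" "q < 2" "0 \<le> d" "0 \<le> \<delta>" "0 < \<rho>"
  shows "\<delta> * d powr q - q * \<rho> / 2 * d\<^sup>2 \<le> (2 - q) * \<delta> powr (2 / (2 - q)) / (2 * \<rho> powr (q / (2 - q)))"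
proof (cases "q = 0")
  case True
  have "d powr 0 \<le> 1" by (simp add: powr_def)
  hence "\<delta> * d powr 0 \<le> \<delta>" using assms by (simp add: mult_left_le)
  then show ?thesis using True assms by simp
next
  case qpos: False
  hence q0: "q > 0" using assms by simp
  have C0: "0 \<le> (2 - q) * \<delta> powr (2 / (2 - q)) / (2 * \<rho> powr (q / (2 - q)))"
    using assms by simp
  show ?thesis
  proof (cases "d = 0 \<or> \<delta> = 0")
    case True
    then show ?thesis using C0 q0 assms by auto
  next
    case False
    hence dp: "d > 0" and dl: "\<delta> > 0" using assms by auto
    define a where "a = \<rho> powr (q/2) * d powr q"
    define b where "b = \<delta> * \<rho> powr (- q/2)"
    have ab: "a * b = \<delta> * d powr q"
      using assms by (simp add: a_def b_def powr_minus field_simps)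
    have Y: "a * b \<le> a powr (2/q) / (2/q) + b powr (2/(2-q)) / (2/(2-q))"
    proof (rule Youngs_inequality)
      show "2/q > 1" using q0 assms by (simp add: field_simps)
      show "2/(2-q) > 1" using q0 assms by (simp add: field_simps)
      show "1 / (2/q) + 1 / (2/(2-q)) = 1" using q0 assms by (simp add: field_simps)
      show "a \<ge> 0" by (simp add: a_def)
      show "b \<ge> 0" using dl by (simp add: b_def)
    qed
    have pa: "a powr (2/q) = \<rho> * d\<^sup>2"
    proof -
      have "a powr (2/q) = (\<rho> powr (q/2)) powr (2/q) * (d powr q) powr (2/q)"
        unfolding a_def using assms dp by (simp add: powr_mult)
      also have "\<dots> = \<rho> powr (q/2 * (2/q)) * d powr (q * (2/q))"
        by (simp only: powr_powr)
      also have "q/2 * (2/q) = 1" using q0 by simp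
      also have "q * (2/q) = 2" using q0 by simp
      finally show ?thesis using assms dp by (simp add: powr_numeral)
    qed
    have pb: "b powr (2/(2-q)) = \<delta> powr (2/(2-q)) / \<rho> powr (q/(2-q))"
    proof -
      have "b powr (2/(2-q)) = \<delta> powr (2/(2-q)) * (\<rho> powr (- q/2)) powr (2/(2-q))"
        unfolding b_def using assms dl by (simp add: powr_mult)
      also have "(\<rho> powr (- q/2)) powr (2/(2-q)) = \<rho> powr (- q/2 * (2/(2-q)))"
        by (simp only: powr_powr)
      also have "- q/2 * (2/(2-q)) = - (q/(2-q))" using assms by (simp add: field_simps)
      finally show ?thesis by (simp add: powr_minus divide_inverse)
    qed
    have "a powr (2/q) / (2/q) = q * \<rho> / 2 * d\<^sup>2" using pa by simp
    moreover have "b powr (2/(2-q)) / (2/(2-q)) = (2 - q) * \<delta> powr (2 / (2 - q)) / (2 * \<rho> powr (q / (2 - q)))"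
      using pb by (simp add: mult.commute)
    ultimately show ?thesis using Y ab by linarith
  qed
qed



lemma norm_diff_sq:
  fixes a b :: "'a::real_inner"
  shows "(norm (a - t *\<^sub>R b))\<^sup>2 = (norm a)\<^sup>2 - 2 * t * inner a b + t\<^sup>2 * (norm b)\<^sup>2"
  unfolding power2_norm_eq_inner
  by (simp add: inner_diff_left inner_diff_right inner_commute power2_eq_square algebra_simps)

lemma prox_three_point:
  fixes h :: "'a::real_inner \<Rightarrow> ereal" and H :: "'a \<Rightarrow> real"
  assumes hfin: "\<And>y. y \<in> edom h \<Longrightarrow> h y = ereal (H y)"
    and hconv: "convex_on (edom h) H"
    and \<alpha>: "\<alpha> > 0" and p: "p \<in> prox_set \<alpha> h z" and u: "u \<in> edom h"
  shows "H p + (norm (z - p))\<^sup>2 / (2 * \<alpha>) + (norm (u - p))\<^sup>2 / (2 * \<alpha>)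
         \<le> H u + (norm (z - u))\<^sup>2 / (2 * \<alpha>)"
proof -
  have pd: "p \<in> edom h" using p by (simp add: prox_set_def)
  have mn: "H p + (norm (z - p))\<^sup>2 / (2 * \<alpha>) \<le> H y + (norm (z - y))\<^sup>2 / (2 * \<alpha>)"
    if "y \<in> edom h" for y
  proof -
    have "h p + ereal ((norm (z - p))\<^sup>2 / (2 * \<alpha>)) \<le> h y + ereal ((norm (z - y))\<^sup>2 / (2 * \<alpha>))"
      using p that by (simp add: prox_set_def)
    then show ?thesis using hfin[OF pd] hfin[OF that] by simp
  qed
  define I where "I = inner (z - p) (u - p)"
  define N where "N = (norm (u - p))\<^sup>2"
  have N0: "N \<ge> 0" by (simp add: N_def)
  have key: "H u - H p \<ge> I / \<alpha> - t * N / (2 * \<alpha>)" if t: "0 < t" "t \<le> 1" for t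
  proof -
    define w where "w = (1 - t) *\<^sub>R p + t *\<^sub>R u"
    have cv: "convex (edom h)" using hconv convex_on_imp_convex by blast
    have wd: "w \<in> edom h" unfolding w_def
      using cv pd u t by (simp add: convex_alt)
    have Hw: "H w \<le> (1 - t) * H p + t * H u"
      unfolding w_def using convex_onD[OF hconv, of t p u] t pd u by simp
    have zw: "z - w = (z - p) - t *\<^sub>R (u - p)" unfolding w_def by (simp add: algebra_simps)
    have nw: "(norm (z - w))\<^sup>2 = (norm (z - p))\<^sup>2 - 2 * t * I + t\<^sup>2 * N"
      unfolding zw I_def N_def by (rule norm_diff_sq)
    have "H p + (norm (z - p))\<^sup>2 / (2 * \<alpha>) \<le> (1 - t) * H p + t * H u + ((norm (z - p))\<^sup>2 - 2 * t * I + t\<^sup>2 * N) / (2 * \<alpha>)"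
      using mn[OF wd] Hw nw by simp
    moreover have "((norm (z - p))\<^sup>2 - 2 * t * I + t\<^sup>2 * N) / (2 * \<alpha>)
       = (norm (z - p))\<^sup>2 / (2 * \<alpha>) - t * (I / \<alpha> - t * N / (2 * \<alpha>))"
      using \<alpha> by (simp add: field_simps power2_eq_square)
    ultimately have "t * (I / \<alpha> - t * N / (2 * \<alpha>)) \<le> t * (H u - H p)"
      by (simp add: algebra_simps)
    then show ?thesis using t by simp
  qed
  have main: "H u - H p \<ge> I / \<alpha>"
  proof (rule ccontr)
    assume nt: "\<not> ?thesis"
    define e where "e = I / \<alpha> - (H u - H p)"
    have e: "e > 0" using nt by (simp add: e_def)
    define t where "t = min 1 (e * \<alpha> / (N + 1))"
    have t0: "t > 0" using e \<alpha> N0 by (simp add: t_def)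
    have t1: "t \<le> 1" by (simp add: t_def)
    have "t * N \<le> e * \<alpha> / (N + 1) * N" using N0 by (intro mult_right_mono) (auto simp: t_def)
    also have "\<dots> < e * \<alpha>"
    proof -
      have "N / (N + 1) < 1" using N0 by simp
      hence "e * \<alpha> * (N / (N + 1)) < e * \<alpha> * 1" using e \<alpha> by (intro mult_strict_left_mono) auto
      thus ?thesis by simp
    qed
    finally have tn: "t * N < e * \<alpha>" .
    have "e * \<alpha> > 0" using \<alpha> e by simp
    hence "t * N < 2 * e * \<alpha>" using tn by linarith
    hence "t * N / (2 * \<alpha>) < e" using \<alpha> by (simp add: field_simps)
    with key[OF t0 t1] show False by (simp add: e_def)
  qed
  have nzu: "(norm (z - u))\<^sup>2 = (norm (z - p))\<^sup>2 - 2 * I + N"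
  proof -
    have "z - u = (z - p) - 1 *\<^sub>R (u - p)" by simp
    then show ?thesis unfolding I_def N_def using norm_diff_sq[of "z - p" 1 "u - p"] by simp
  qed
  have "((norm (z - p))\<^sup>2 - 2 * I + N) / (2 * \<alpha>) = (norm (z - p))\<^sup>2 / (2 * \<alpha>) - I / \<alpha> + N / (2 * \<alpha>)"
    using \<alpha> by (simp add: diff_divide_distrib add_divide_distrib)
  then show ?thesis using main unfolding nzu N_def[symmetric] by linarith
qed


theorem corollary2:
  fixes h :: "'a::euclidean_space \<Rightarrow> ereal"
    and F :: "'a \<Rightarrow> real"
    and f :: "'a \<Rightarrow> ereal"
    and g :: "'a \<Rightarrow> 'a"
    and x :: "nat \<Rightarrow> 'a"
    and xstar :: 'a
    and q L \<delta> \<rho> \<alpha> :: real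
    and k :: nat
  assumes h_proper: "proper_fun h" and h_closed: "closed_fun h" and h_convex: "convex_fun h"
    and F_convex: "convex_on UNIV F"
    and f_def: "\<And>y. f y = ereal (F y) + h y"
    and xstar_min: "\<And>y. f xstar \<le> f y"
    and q: "0 \<le> q" "q < 2" and L: "L > 0" and \<delta>: "\<delta> \<ge> 0"
    and inexact_oracle: "\<And>y z. y \<in> edom f \<Longrightarrow> z \<in> edom f \<Longrightarrow>
        0 \<le> F z - (F y + inner (g y) (z - y)) \<and>
        F z - (F y + inner (g y) (z - y)) \<le> L / 2 * (norm (z - y))\<^sup>2 + \<delta> * norm (z - y) powr q"
    and \<rho>: "\<rho> > 0"
    and \<alpha>_def: "\<alpha> = 1 / (L + q * \<rho>)"
    and x0: "x 0 \<in> edom h"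
    and iter: "\<And>i. x (Suc i) \<in> prox_set \<alpha> h (x i - \<alpha> *\<^sub>R g (x i))"
    and k: "k \<ge> 1"
  shows "f ((1 / real (k + 1)) *\<^sub>R (\<Sum>i\<le>k. x (Suc i))) - f xstar
         \<le> ereal ((L + q * \<rho>) * (norm (x 0 - xstar))\<^sup>2 / (2 * real k)
                  + (2 - q) * \<delta> powr (2 / (2 - q)) / (2 * \<rho> powr (q / (2 - q))))"
  proof -
  define H where "H y = real_of_ereal (h y)" for y
  have hfin: "h y = ereal (H y)" if "y \<in> edom h" for y
    using that h_proper by (cases "h y") (auto simp: edom_def proper_fun_def H_def)
  have edf: "edom f = edom h"
  proof -
    have "f y < \<infinity> \<longleftrightarrow> h y < \<infinity>" for y
      using h_proper by (cases "h y") (auto simp: f_def proper_fun_def)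
    then show ?thesis by (simp add: edom_def)
  qed
  have cvx: "h (u *\<^sub>R a + v *\<^sub>R b) \<le> ereal (u * H a + v * H b)"
    if "a \<in> edom h" "b \<in> edom h" "u \<ge> 0" "v \<ge> 0" "u + v = 1" for a b u v
  proof -
    have "(a, H a) \<in> Defs.epigraph h" "(b, H b) \<in> Defs.epigraph h"
      using hfin that by (auto simp: Defs.epigraph_def)
    hence "u *\<^sub>R (a, H a) + v *\<^sub>R (b, H b) \<in> Defs.epigraph h"
      using h_convex that unfolding convex_fun_def by (intro convexD) auto
    thus ?thesis by (simp add: Defs.epigraph_def)
  qed
  have cdom: "convex (edom h)"
    unfolding convex_def
  proof (intro ballI allI impI)
    fix a b and u v :: real assume "a \<in> edom h" "b \<in> edom h" "0 \<le> u" "0 \<le> v" "u + v = 1"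
    then have "h (u *\<^sub>R a + v *\<^sub>R b) \<le> ereal (u * H a + v * H b)" by (rule cvx)
    then have "h (u *\<^sub>R a + v *\<^sub>R b) < \<infinity>" by (rule le_less_trans) simp
    then show "u *\<^sub>R a + v *\<^sub>R b \<in> edom h" by (simp add: edom_def)
  qed
  have Hconv: "convex_on (edom h) H"
    unfolding convex_on_def
  proof (intro conjI cdom ballI allI impI)
    fix a b and u v :: real assume a: "a \<in> edom h" "b \<in> edom h" "0 \<le> u" "0 \<le> v" "u + v = 1"
    then have "u *\<^sub>R a + v *\<^sub>R b \<in> edom h" using cdom unfolding convex_def by blast
    with cvx[OF a] show "H (u *\<^sub>R a + v *\<^sub>R b) \<le> u * H a + v * H b" using hfin by simp
  qed
  have xdom: "x i \<in> edom h" for i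
    using x0 iter[of "i - 1"] by (cases i) (auto simp: prox_set_def)
  have xsdom: "xstar \<in> edom h"
  proof -
    have "x 0 \<in> edom f" using xdom[of 0] edf by simp
    hence "f (x 0) < \<infinity>" by (simp add: edom_def)
    with xstar_min[of "x 0"] have "f xstar < \<infinity>" by (rule le_less_trans)
    then have "xstar \<in> edom f" by (simp add: edom_def)
    then show ?thesis using edf by simp
  qed
  define c where "c = L + q * \<rho>"
  have c0: "c > 0" unfolding c_def using L mult_nonneg_nonneg[of q \<rho>] q \<rho> by linarith
  have \<alpha>c: "\<alpha> = 1 / c" by (simp add: \<alpha>_def c_def)
  have \<alpha>0: "\<alpha> > 0" using c0 \<alpha>c by simp
  define C where "C = (2 - q) * \<delta> powr (2 / (2 - q)) / (2 * \<rho> powr (q / (2 - q)))"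
  define \<Phi> where "\<Phi> y = F y + H y" for y
  define r where "r i = (norm (x i - xstar))\<^sup>2" for i
  have step: "\<Phi> (x (Suc i)) - \<Phi> xstar \<le> c / 2 * (r i - r (Suc i)) + C" for i
  proof -
    define a where "a = x i"
    define b where "b = x (Suc i)"
    define s where "s = xstar"
    define G where "G = g a"
    have P: "H b + (norm ((a - \<alpha> *\<^sub>R G) - b))\<^sup>2 / (2 * \<alpha>) + (norm (s - b))\<^sup>2 / (2 * \<alpha>)
         \<le> H s + (norm ((a - \<alpha> *\<^sub>R G) - s))\<^sup>2 / (2 * \<alpha>)"
      unfolding a_def b_def s_def G_def
      by (rule prox_three_point[OF hfin Hconv \<alpha>0 iter xsdom])
    have e1: "(norm ((a - \<alpha> *\<^sub>R G) - b))\<^sup>2 = (norm (a - b))\<^sup>2 - 2 * \<alpha> * inner (a - b) G + \<alpha>\<^sup>2 * (norm G)\<^sup>2"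
      using norm_diff_sq[of "a - b" \<alpha> G] by (simp add: algebra_simps)
    have e2: "(norm ((a - \<alpha> *\<^sub>R G) - s))\<^sup>2 = (norm (a - s))\<^sup>2 - 2 * \<alpha> * inner (a - s) G + \<alpha>\<^sup>2 * (norm G)\<^sup>2"
      using norm_diff_sq[of "a - s" \<alpha> G] by (simp add: algebra_simps)
    have P2: "H b + (norm (a - b))\<^sup>2 / (2 * \<alpha>) - inner (a - b) G + (norm (s - b))\<^sup>2 / (2 * \<alpha>)
         \<le> H s + (norm (a - s))\<^sup>2 / (2 * \<alpha>) - inner (a - s) G"
    proof -
      have "(norm ((a - \<alpha> *\<^sub>R G) - b))\<^sup>2 / (2 * \<alpha>) = (norm (a - b))\<^sup>2 / (2 * \<alpha>) - inner (a - b) G + \<alpha> * (norm G)\<^sup>2 / 2"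
        unfolding e1 using \<alpha>0 by (simp add: field_simps power2_eq_square)
      moreover have "(norm ((a - \<alpha> *\<^sub>R G) - s))\<^sup>2 / (2 * \<alpha>) = (norm (a - s))\<^sup>2 / (2 * \<alpha>) - inner (a - s) G + \<alpha> * (norm G)\<^sup>2 / 2"
        unfolding e2 using \<alpha>0 by (simp add: field_simps power2_eq_square)
      ultimately show ?thesis using P by linarith
    qed
    have ad: "a \<in> edom f" "b \<in> edom f" "s \<in> edom f"
      using xdom xsdom edf by (auto simp: a_def b_def s_def)
    define d where "d = norm (b - a)"
    have O1: "F b - (F a + inner G (b - a)) \<le> L / 2 * d\<^sup>2 + \<delta> * d powr q"
      using inexact_oracle[OF ad(1) ad(2)] by (simp add: G_def d_def)
    have O2: "0 \<le> F s - (F a + inner G (s - a))"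
      using inexact_oracle[OF ad(1) ad(3)] by (simp add: G_def)
    have Y: "\<delta> * d powr q - q * \<rho> / 2 * d\<^sup>2 \<le> C"
      unfolding C_def by (rule young_aux) (use q \<delta> \<rho> in \<open>auto simp: d_def\<close>)
    have inn: "inner (a - b) G = inner G a - inner G b" "inner (a - s) G = inner G a - inner G s"
      "inner G (b - a) = inner G b - inner G a" "inner G (s - a) = inner G s - inner G a"
      by (simp_all add: inner_diff_left inner_diff_right inner_commute)
    have nab: "(norm (a - b))\<^sup>2 = d\<^sup>2" by (simp add: d_def norm_minus_commute)
    have i2a: "1 / (2 * \<alpha>) = c / 2" using \<alpha>c by simp
    have P3: "H b + c / 2 * d\<^sup>2 - inner (a - b) G + c / 2 * r (Suc i)
         \<le> H s + c / 2 * r i - inner (a - s) G"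
      using P2 unfolding nab r_def a_def[symmetric] b_def[symmetric] s_def[symmetric]
      by (simp add: norm_minus_commute[of s b] \<alpha>c mult.commute)
    have "c / 2 * d\<^sup>2 = L / 2 * d\<^sup>2 + q * \<rho> / 2 * d\<^sup>2" by (simp add: c_def algebra_simps)
    moreover have "c / 2 * (r i - r (Suc i)) = c / 2 * r i - c / 2 * r (Suc i)" by (simp add: algebra_simps)
    ultimately have "F b + H b - (F s + H s) \<le> c / 2 * (r i - r (Suc i)) + C"
      using P3 O1 O2 Y unfolding inn by linarith
    then show ?thesis unfolding \<Phi>_def a_def b_def s_def .
  qed
  have tele: "(\<Sum>i\<le>n. (\<Phi> (x (Suc i)) - \<Phi> xstar)) \<le> c / 2 * (r 0 - r (Suc n)) + real (n + 1) * C" for n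
  proof (induction n)
    case 0 then show ?case using step[of 0] by simp
  next
    case (Suc n)
    then show ?case using step[of "Suc n"] by (simp add: algebra_simps)
  qed
  define w where "w = (1 / real (k + 1)) *\<^sub>R (\<Sum>i\<le>k. x (Suc i))"
  have wsum: "w = (\<Sum>i\<le>k. (1 / real (k + 1)) *\<^sub>R x (Suc i))"
    by (simp add: w_def scaleR_sum_right)
  have wts: "(\<Sum>i\<le>k. 1 / real (k + 1)) = 1" by simp
  have wdom: "w \<in> edom h" unfolding wsum
    by (rule convex_sum[OF _ cdom wts]) (auto simp: xdom)
  have Phiconv: "convex_on (edom h) \<Phi>"
    unfolding \<Phi>_def by (intro convex_on_add convex_on_subset[OF F_convex] Hconv cdom) auto
  have J: "\<Phi> w \<le> (\<Sum>i\<le>k. 1 / real (k + 1) * \<Phi> (x (Suc i)))" unfolding wsum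
    by (rule convex_on_sum[OF _ _ Phiconv wts]) (auto simp: xdom)
  also have "\<dots> = (\<Sum>i\<le>k. (\<Phi> (x (Suc i)) - \<Phi> xstar)) / real (k + 1) + \<Phi> xstar"
  proof -
    have "(\<Sum>i\<le>k. (\<Phi> (x (Suc i)) - \<Phi> xstar)) = (\<Sum>i\<le>k. \<Phi> (x (Suc i))) - real (k + 1) * \<Phi> xstar"
      by (simp add: sum_subtractf)
    moreover have "(\<Sum>i\<le>k. 1 / real (k + 1) * \<Phi> (x (Suc i))) = (\<Sum>i\<le>k. \<Phi> (x (Suc i))) / real (k + 1)"
      by (simp add: sum_divide_distrib)
    ultimately show ?thesis by (simp add: field_simps)
  qed
  finally have J2: "\<Phi> w - \<Phi> xstar \<le> (c / 2 * (r 0 - r (Suc k)) + real (k + 1) * C) / real (k + 1)"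
    using divide_right_mono[OF tele[of k], of "real (k + 1)"] by simp
  have "(c / 2 * (r 0 - r (Suc k)) + real (k + 1) * C) / real (k + 1) \<le> c * r 0 / (2 * real k) + C"
  proof -
    have r0: "r 0 \<ge> 0" "r (Suc k) \<ge> 0" by (simp_all add: r_def)
    have "(c / 2 * (r 0 - r (Suc k)) + real (k + 1) * C) / real (k + 1) = c * (r 0 - r (Suc k)) / (2 * real (k + 1)) + C"
      by (simp add: field_simps)
    also have "c * (r 0 - r (Suc k)) / (2 * real (k + 1)) \<le> c * r 0 / (2 * real (k + 1))"
      using c0 r0 by (intro divide_right_mono) (auto simp: mult_left_mono)
    also have "c * r 0 / (2 * real (k + 1)) \<le> c * r 0 / (2 * real k)"
      using c0 r0 k by (intro divide_left_mono) auto
    finally show ?thesis by simp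
  qed
  with J2 have fin: "\<Phi> w - \<Phi> xstar \<le> c * r 0 / (2 * real k) + C" by linarith
  have "f w - f xstar = ereal (\<Phi> w - \<Phi> xstar)"
    using hfin[OF wdom] hfin[OF xsdom] by (simp add: f_def \<Phi>_def)
  then show ?thesis using fin unfolding w_def[symmetric] C_def[symmetric] c_def[symmetric] r_def
    by simp
qed

end
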